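(* Let $\alpha_n$ denote the number of permutations $\pi \in S_n$ that avoid both $21\text{-}34$ and $34\text{-}21$ as generalized patterns, and let $\alpha_n(21\text{-}34)$ denote the number of $\pi\in S_n$ avoiding $21\text{-}34$. Then $$\lim_{n\to\infty}\left(\frac{\alpha_n}{n!}\right)^{1/n} = \frac{1}{2\log 2},$$ and consequently $\alpha_n(21\text{-}34) \ge \alpha_n = \left(\frac{1}{2\log 2} + o(1)\right)^n n!$.
   Context: A permutation $\pi \in S_n$ contains the generalized pattern $21\text{-}34$ if there exist indices $1 \le i < i+1 < j < j+1 \le n$ such that $(\pi(i),\pi(i+1),\pi(j),\pi(j+1))$ is order-isomorphic to $(2,1,3,4)$, i.e. $\pi(i+1) < \pi(i) < \pi(j) < \pi(j+1)$; it contains $34\text{-}21$ if there exist such indices with $(\pi(i),\pi(i+1),\pi(j),\pi(j+1))$ order-isomorphic to $(3,4,2,1)$, i.e. $\pi(j+1) < \pi(j) < \pi(i) < \pi(i+1)$. A permutation avoids a generalized pattern if it does not contain it. *)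

theory Defs
  imports "HOL-Analysis.Analysis" "HOL-Combinatorics.Permutations"
begin

definition contains_21_34 :: "nat \<Rightarrow> (nat \<Rightarrow> nat) \<Rightarrow> bool" where
  "contains_21_34 n p \<longleftrightarrow>
     (\<exists>i j. 1 \<le> i \<and> i + 1 < j \<and> j + 1 \<le> n \<and>
            p (i+1) < p i \<and> p i < p j \<and> p j < p (j+1))"

definition contains_34_21 :: "nat \<Rightarrow> (nat \<Rightarrow> nat) \<Rightarrow> bool" where
  "contains_34_21 n p \<longleftrightarrow>
     (\<exists>i j. 1 \<le> i \<and> i + 1 < j \<and> j + 1 \<le> n \<and>
            p (j+1) < p j \<and> p j < p i \<and> p i < p (i+1))"

definition alpha :: "nat \<Rightarrow> nat" where
  "alpha n = card {p. p permutes {1..n} \<and> \<not> contains_21_34 n p \<and> \<not> contains_34_21 n p}"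

definition alpha_21_34 :: "nat \<Rightarrow> nat" where
  "alpha_21_34 n = card {p. p permutes {1..n} \<and> \<not> contains_21_34 n p}"

end

theory Submission
  imports Defs "HOL-Real_Asymp.Real_Asymp"
begin


fun valid :: "nat \<Rightarrow> nat list \<Rightarrow> bool" where
  "valid t [] = True"
| "valid t [x] = True"
| "valid t (x # y # zs) = ((x \<le> t \<longleftrightarrow> x < y) \<and> valid t (y # zs))"

lemma valid_append:
  "valid t (xs @ ys) \<longleftrightarrow> valid t xs \<and> valid t ys \<and>
     (xs \<noteq> [] \<and> ys \<noteq> [] \<longrightarrow> (last xs \<le> t \<longleftrightarrow> last xs < hd ys))"
proof (induction t xs rule: valid.induct)
  case 2 then show ?case by (cases ys) auto
qed auto

lemma valid_nth:
  "valid t xs \<longleftrightarrow> (\<forall>i. Suc i < length xs \<longrightarrow> (xs!i \<le> t \<longleftrightarrow> xs!i < xs!Suc i))"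
proof (induction t xs rule: valid.induct)
  case (3 t x y zs)
  show ?case
  proof
    assume "valid t (x # y # zs)"
    then show "\<forall>i. Suc i < length (x # y # zs) \<longrightarrow> ((x # y # zs) ! i \<le> t) = ((x # y # zs) ! i < (x # y # zs) ! Suc i)"
      using 3 by (auto simp: nth_Cons split: nat.splits)
  next
    assume h: "\<forall>i. Suc i < length (x # y # zs) \<longrightarrow> ((x # y # zs) ! i \<le> t) = ((x # y # zs) ! i < (x # y # zs) ! Suc i)"
    have "(x \<le> t \<longleftrightarrow> x < y)" using h[rule_format, of 0] by simp
    moreover have "valid t (y # zs)" unfolding 3
    proof (intro allI impI)
      fix i assume "Suc i < length (y#zs)"
      then show "((y # zs) ! i \<le> t) = ((y # zs) ! i < (y # zs) ! Suc i)"
        using h[rule_format, of "Suc i"] by simp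
    qed
    ultimately show "valid t (x # y # zs)" by simp
  qed
qed auto



definition V :: "nat \<Rightarrow> nat set \<Rightarrow> nat list set" where
  "V t A = {xs. distinct xs \<and> set xs = A \<and> valid t xs}"

lemma perm_range: "p permutes {1..n} \<Longrightarrow> 1 \<le> k \<Longrightarrow> k \<le> n \<Longrightarrow> 1 \<le> p k \<and> p k \<le> n"
  using permutes_in_image[of p "{1..n}" k] by auto

lemma key:
  assumes p: "p permutes {1..n}" and c1: "\<not> contains_21_34 n p" and c2: "\<not> contains_34_21 n p"
    and k: "1 \<le> k" "k < n" "p (k+1) < p k" and j: "1 \<le> j" "j < n" "p j < p (j+1)"
  shows "p j < p k"
proof -
  have inj: "inj p" using p permutes_inj by blast
  have ne: "k \<noteq> j \<Longrightarrow> p k \<noteq> p j" using inj by (auto dest: injD)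
  consider "k + 1 < j" | "j + 1 < k" | "j = k + 1" | "k = j + 1" | "j = k" by linarith
  then show ?thesis
  proof cases
    case 1
    have "\<not> (1 \<le> k \<and> k + 1 < j \<and> j + 1 \<le> n \<and> p (k+1) < p k \<and> p k < p j \<and> p j < p (j+1))"
      using c1 unfolding contains_21_34_def by blast
    then have "\<not> p k < p j" using k j 1 by simp
    then show ?thesis using ne 1 by fastforce
  next
    case 2
    have "\<not> (1 \<le> j \<and> j + 1 < k \<and> k + 1 \<le> n \<and> p (k+1) < p k \<and> p k < p j \<and> p j < p (j+1))"
      using c2 unfolding contains_34_21_def by blast
    then have "\<not> p k < p j" using k j 2 by simp
    then show ?thesis using ne 2 by fastforce
  next
    case 3 then show ?thesis using k by simp
  next
    case 4 then show ?thesis using j by simp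
  next
    case 5 then show ?thesis using k j by simp
  qed
qed

lemma alpha_le: "alpha n \<le> (\<Sum>t\<le>n. card (V t {1..n}))"
proof -
  define S where "S = {p. p permutes {1..n} \<and> \<not> contains_21_34 n p \<and> \<not> contains_34_21 n p}"
  define f where "f p = map p [1..<Suc n]" for p :: "nat \<Rightarrow> nat"
  have inj: "inj_on f S"
  proof (rule inj_onI)
    fix p q assume pS: "p \<in> S" and qS: "q \<in> S" and e: "f p = f q"
    show "p = q"
    proof
      fix x
      show "p x = q x"
      proof (cases "x \<in> {1..n}")
        case True
        then have "f p ! (x - 1) = p x" "f q ! (x - 1) = q x" unfolding f_def by (auto simp del: upt_Suc)
        then show ?thesis using e by simp
      next
        case False
        have "p permutes {1..n}" "q permutes {1..n}" using pS qS unfolding S_def by auto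
        then show ?thesis using False by (simp add: permutes_not_in)
      qed
    qed
  qed
  have sub: "f ` S \<subseteq> (\<Union>t\<in>{..n}. V t {1..n})"
  proof
    fix xs assume "xs \<in> f ` S"
    then obtain p where pS: "p \<in> S" and xs: "xs = f p" by blast
    have p: "p permutes {1..n}" and c1: "\<not> contains_21_34 n p" and c2: "\<not> contains_34_21 n p"
      using pS unfolding S_def by auto
    define K where "K = {k. 1 \<le> k \<and> k < n \<and> p k < p (Suc k)}"
    define T where "T = insert 0 (p ` K)"
    define t where "t = Max T"
    have finK: "finite K" unfolding K_def by (rule finite_subset[of _ "{..<n}"]) auto
    have finT: "finite T" unfolding T_def using finK by simp
    have Tne: "T \<noteq> {}" unfolding T_def by simp
    have Tle: "\<forall>x\<in>T. x \<le> n" unfolding T_def K_def using perm_range[OF p] by auto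
    have tn: "t \<le> n" unfolding t_def using Tle finT Tne by simp
    have dist: "distinct xs" unfolding xs f_def
      by (simp add: distinct_map inj_on_subset[OF permutes_inj[OF p]])
    have set: "set xs = {1..n}" unfolding xs f_def
      using permutes_image[OF p] by (metis atLeastLessThanSuc_atLeastAtMost set_map set_upt)
    have val: "valid t xs" unfolding valid_nth
    proof (intro allI impI)
      fix i assume i: "Suc i < length xs"
      then have i': "Suc i < n" unfolding xs f_def by (simp del: upt_Suc)
      have e1: "xs ! i = p (Suc i)" "xs ! Suc i = p (Suc (Suc i))" unfolding xs f_def using i' by (auto simp del: upt_Suc)
      show "(xs ! i \<le> t) = (xs ! i < xs ! Suc i)"
      proof
        assume le: "xs ! i \<le> t"
        show "xs ! i < xs ! Suc i"
        proof (rule ccontr)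
          assume "\<not> xs ! i < xs ! Suc i"
          moreover have "xs ! i \<noteq> xs ! Suc i" using dist i by (simp add: nth_eq_iff_index_eq)
          ultimately have desc: "p (Suc i + 1) < p (Suc i)" using e1 by simp
          have "t \<in> T" unfolding t_def using Max_in[OF finT Tne] by blast
          then consider "t = 0" | j where "1 \<le> j" "j < n" "p j < p (Suc j)" "t = p j"
            unfolding T_def K_def by blast
          then show False
          proof cases
            case 1
            then show False using le e1 perm_range[OF p, of "Suc i"] i' by simp
          next
            case 2
            have "p j < p (Suc i)" using key[OF p c1 c2, of "Suc i" j] 2 desc i' by simp
            then show False using le e1 2 by simp
          qed
        qed
      next
        assume "xs ! i < xs ! Suc i"
        then have "p (Suc i) \<in> T" unfolding T_def K_def using e1 i' by auto
        then show "xs ! i \<le> t" unfolding t_def using finT e1 by simp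
      qed
    qed
    show "xs \<in> (\<Union>t\<in>{..n}. V t {1..n})" using tn dist set val unfolding V_def by auto
  qed
  have "alpha n = card S" unfolding alpha_def S_def by simp
  also have "\<dots> = card (f ` S)" using card_image[OF inj] by simp
  also have "\<dots> \<le> card (\<Union>t\<in>{..n}. V t {1..n})"
  proof (rule card_mono[OF _ sub])
    have "\<And>t. V t {1..n} \<subseteq> {xs. set xs \<subseteq> {1..n} \<and> length xs \<le> n}"
      unfolding V_def by (auto dest!: distinct_card)
    then show "finite (\<Union>t\<in>{..n}. V t {1..n})"
      by (intro finite_UN_I) (auto intro: finite_subset[OF _ finite_lists_length_le])
  qed
  also have "\<dots> \<le> (\<Sum>t\<le>n. card (V t {1..n}))" by (rule card_UN_le) simp
  finally show ?thesis .
qed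



definition WL :: "nat \<Rightarrow> nat set \<Rightarrow> nat list set" where
  "WL t A = {xs. distinct xs \<and> set xs = A \<and> valid t xs \<and> (xs = [] \<or> hd xs \<le> t)}"
definition WH :: "nat \<Rightarrow> nat set \<Rightarrow> nat list set" where
  "WH t A = {xs. distinct xs \<and> set xs = A \<and> valid t xs \<and> (xs = [] \<or> t < hd xs)}"

lemma V_sub: "V t A \<subseteq> WL t A \<union> WH t A"
  unfolding V_def WL_def WH_def by auto

lemma lists_fin: "finite A \<Longrightarrow> finite {xs. distinct xs \<and> set xs = A}"
  by (rule finite_subset[of _ "{xs. set xs \<subseteq> A \<and> length xs \<le> card A}"])
     (auto dest!: distinct_card intro: finite_lists_length_le)

lemma WL_fin: "finite A \<Longrightarrow> finite (WL t A)"
  by (rule finite_subset[OF _ lists_fin]) (auto simp: WL_def)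
lemma WH_fin: "finite A \<Longrightarrow> finite (WH t A)"
  by (rule finite_subset[OF _ lists_fin]) (auto simp: WH_def)

lemma valid_low_sorted: "valid t xs \<Longrightarrow> (\<forall>x\<in>set xs. x \<le> t) \<Longrightarrow> sorted_wrt (<) xs"
proof (induction t xs rule: valid.induct)
  case (3 t x y zs)
  then have "x < y" "sorted_wrt (<) (y # zs)" by auto
  then show ?case by auto
qed auto

lemma valid_high_sorted: "valid t xs \<Longrightarrow> (\<forall>x\<in>set xs. t < x) \<Longrightarrow> distinct xs \<Longrightarrow> sorted_wrt (>) xs"
proof (induction t xs rule: valid.induct)
  case (3 t x y zs)
  then have "y < x" "sorted_wrt (>) (y # zs)" by auto
  then show ?case by auto
qed auto

lemma sorted_lst: "sorted_wrt (<) xs \<Longrightarrow> sorted_list_of_set (set xs) = xs"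
  by (simp add: sorted_list_of_set_sort_remdups strict_sorted_iff distinct_remdups_id sorted_sort_id)

lemma sorted_lst_rev: "sorted_wrt (>) xs \<Longrightarrow> rev (sorted_list_of_set (set xs)) = xs"
proof -
  assume "sorted_wrt (>) xs"
  then have "sorted_wrt (<) (rev xs)" by (simp add: sorted_wrt_rev)
  then have "sorted_list_of_set (set (rev xs)) = rev xs" by (rule sorted_lst)
  then show ?thesis by simp
qed

lemma WL_decomp:
  assumes xs: "xs \<in> WL t A" and ne: "xs \<noteq> []"
  defines "D \<equiv> set (takeWhile (\<lambda>x. x \<le> t) xs)"
  shows "D \<noteq> {} \<and> D \<subseteq> A \<and> (\<forall>x\<in>D. x \<le> t) \<and> dropWhile (\<lambda>x. x \<le> t) xs \<in> WH t (A - D)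
         \<and> xs = sorted_list_of_set D @ dropWhile (\<lambda>x. x \<le> t) xs"
proof -
  let ?tw = "takeWhile (\<lambda>x. x \<le> t) xs" and ?dw = "dropWhile (\<lambda>x. x \<le> t) xs"
  have d: "distinct xs" and s: "set xs = A" and v: "valid t xs" and h: "hd xs \<le> t"
    using xs ne unfolding WL_def by auto
  have split: "xs = ?tw @ ?dw" by simp
  have "?tw \<noteq> []" using ne h by (cases xs) auto
  then have Dne: "D \<noteq> {}" unfolding D_def by simp
  have vv: "valid t ?tw" "valid t ?dw" using v split valid_append by metis+
  have low: "\<forall>x\<in>D. x \<le> t" unfolding D_def by (auto dest: set_takeWhileD)
  have srt: "sorted_wrt (<) ?tw" using valid_low_sorted[OF vv(1)] low unfolding D_def by simp
  have eq: "sorted_list_of_set D = ?tw" unfolding D_def using sorted_lst[OF srt] .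
  have dd: "distinct ?dw" using d split by (metis distinct_append)
  have disj: "set ?tw \<inter> set ?dw = {}" using d split by (metis distinct_append)
  have sdw: "set ?dw = A - D" using s split disj unfolding D_def by (metis Diff_cancel Diff_eq_empty_iff Un_Diff Un_Diff_Int inf_commute set_append sup.idem Diff_Int_distrib2 Int_absorb Un_empty_right)
  have hd: "?dw = [] \<or> t < hd ?dw" by (metis hd_dropWhile not_le_imp_less)
  show ?thesis using Dne low dd sdw hd vv eq s split unfolding WH_def D_def by (auto dest: set_takeWhileD)
qed

lemma WH_decomp:
  assumes xs: "xs \<in> WH t A" and ne: "xs \<noteq> []"
  defines "D \<equiv> set (takeWhile (\<lambda>x. t < x) xs)"
  shows "D \<noteq> {} \<and> D \<subseteq> A \<and> (\<forall>x\<in>D. t < x) \<and> dropWhile (\<lambda>x. t < x) xs \<in> WL t (A - D)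
         \<and> xs = rev (sorted_list_of_set D) @ dropWhile (\<lambda>x. t < x) xs"
proof -
  let ?tw = "takeWhile (\<lambda>x. t < x) xs" and ?dw = "dropWhile (\<lambda>x. t < x) xs"
  have d: "distinct xs" and s: "set xs = A" and v: "valid t xs" and h: "t < hd xs"
    using xs ne unfolding WH_def by auto
  have split: "xs = ?tw @ ?dw" by simp
  have "?tw \<noteq> []" using ne h by (cases xs) auto
  then have Dne: "D \<noteq> {}" unfolding D_def by simp
  have vv: "valid t ?tw" "valid t ?dw" using v split valid_append by metis+
  have high: "\<forall>x\<in>D. t < x" unfolding D_def by (auto dest: set_takeWhileD)
  have "distinct ?tw" using d split by (metis distinct_append)
  then have srt: "sorted_wrt (>) ?tw" using valid_high_sorted[OF vv(1)] high unfolding D_def by simp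
  have eq: "rev (sorted_list_of_set D) = ?tw" unfolding D_def using sorted_lst_rev[OF srt] .
  have dd: "distinct ?dw" using d split by (metis distinct_append)
  have disj: "set ?tw \<inter> set ?dw = {}" using d split by (metis distinct_append)
  have sdw: "set ?dw = A - D" using s split disj unfolding D_def by (metis Diff_cancel Diff_eq_empty_iff Un_Diff Un_Diff_Int inf_commute set_append sup.idem Diff_Int_distrib2 Int_absorb Un_empty_right)
  have hd: "?dw = [] \<or> hd ?dw \<le> t" by (metis hd_dropWhile not_less)
  show ?thesis using Dne high dd sdw hd vv eq s split unfolding WL_def D_def by (auto dest: set_takeWhileD)
qed



lemma card_WL_rec:
  assumes fin: "finite A" and ne: "A \<noteq> {}"
  shows "card (WL t A) \<le> (\<Sum>D\<in>{D. D \<subseteq> {x\<in>A. x \<le> t} \<and> D \<noteq> {}}. card (WH t (A - D)))"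
proof -
  let ?Ds = "{D. D \<subseteq> {x\<in>A. x \<le> t} \<and> D \<noteq> {}}"
  let ?f = "\<lambda>(D, ys). sorted_list_of_set D @ ys"
  have finDs: "finite ?Ds" using fin by simp
  have sub: "WL t A \<subseteq> ?f ` (SIGMA D:?Ds. WH t (A - D))"
  proof
    fix xs assume xs: "xs \<in> WL t A"
    have "xs \<noteq> []" using xs ne unfolding WL_def by auto
    note dc = WL_decomp[OF xs this]
    let ?D = "set (takeWhile (\<lambda>x. x \<le> t) xs)"
    have "(?D, dropWhile (\<lambda>x. x \<le> t) xs) \<in> (SIGMA D:?Ds. WH t (A - D))" using dc by auto
    moreover have "xs = ?f (?D, dropWhile (\<lambda>x. x \<le> t) xs)" using dc by simp
    ultimately show "xs \<in> ?f ` (SIGMA D:?Ds. WH t (A - D))" by blast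
  qed
  have "card (WL t A) \<le> card (?f ` (SIGMA D:?Ds. WH t (A - D)))"
    by (rule card_mono[OF _ sub]) (use finDs fin WH_fin in auto)
  also have "\<dots> \<le> card (SIGMA D:?Ds. WH t (A - D))" by (rule card_image_le) (use finDs fin WH_fin in auto)
  also have "\<dots> = (\<Sum>D\<in>?Ds. card (WH t (A - D)))" by (rule card_SigmaI) (use finDs fin WH_fin in auto)
  finally show ?thesis .
qed

lemma card_WH_rec:
  assumes fin: "finite A" and ne: "A \<noteq> {}"
  shows "card (WH t A) \<le> (\<Sum>D\<in>{D. D \<subseteq> {x\<in>A. t < x} \<and> D \<noteq> {}}. card (WL t (A - D)))"
proof -
  let ?Ds = "{D. D \<subseteq> {x\<in>A. t < x} \<and> D \<noteq> {}}"
  let ?f = "\<lambda>(D, ys). rev (sorted_list_of_set D) @ ys"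
  have finDs: "finite ?Ds" using fin by simp
  have sub: "WH t A \<subseteq> ?f ` (SIGMA D:?Ds. WL t (A - D))"
  proof
    fix xs assume xs: "xs \<in> WH t A"
    have "xs \<noteq> []" using xs ne unfolding WH_def by auto
    note dc = WH_decomp[OF xs this]
    let ?D = "set (takeWhile (\<lambda>x. t < x) xs)"
    have "(?D, dropWhile (\<lambda>x. t < x) xs) \<in> (SIGMA D:?Ds. WL t (A - D))" using dc by auto
    moreover have "xs = ?f (?D, dropWhile (\<lambda>x. t < x) xs)" using dc by simp
    ultimately show "xs \<in> ?f ` (SIGMA D:?Ds. WL t (A - D))" by blast
  qed
  have "card (WH t A) \<le> card (?f ` (SIGMA D:?Ds. WL t (A - D)))"
    by (rule card_mono[OF _ sub]) (use finDs fin WL_fin in auto)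
  also have "\<dots> \<le> card (SIGMA D:?Ds. WL t (A - D))" by (rule card_image_le) (use finDs fin WL_fin in auto)
  also have "\<dots> = (\<Sum>D\<in>?Ds. card (WL t (A - D)))" by (rule card_SigmaI) (use finDs fin WL_fin in auto)
  finally show ?thesis .
qed

lemma sum_subsets_by_card:
  fixes g :: "nat \<Rightarrow> 'a::comm_semiring_1"
  assumes "finite B"
  shows "(\<Sum>D\<in>{D. D \<subseteq> B \<and> D \<noteq> {}}. g (card D)) = (\<Sum>d=1..card B. of_nat (card B choose d) * g d)"
proof -
  have eq: "{D. D \<subseteq> B \<and> D \<noteq> {}} = (\<Union>d\<in>{1..card B}. {D. D \<subseteq> B \<and> card D = d})"
  proof (rule set_eqI, rule iffI)
    fix D assume "D \<in> {D. D \<subseteq> B \<and> D \<noteq> {}}"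
    then have "D \<subseteq> B" "D \<noteq> {}" by auto
    moreover have "finite D" using \<open>D \<subseteq> B\<close> assms finite_subset by auto
    ultimately have "card D \<in> {1..card B}" using card_mono[OF assms] card_0_eq by fastforce
    then show "D \<in> (\<Union>d\<in>{1..card B}. {D. D \<subseteq> B \<and> card D = d})" using \<open>D \<subseteq> B\<close> by auto
  qed auto
  have "(\<Sum>D\<in>{D. D \<subseteq> B \<and> D \<noteq> {}}. g (card D)) =
        (\<Sum>d\<in>{1..card B}. (\<Sum>D\<in>{D. D \<subseteq> B \<and> card D = d}. g (card D)))"
    unfolding eq by (rule sum.UNION_disjoint) (auto simp: assms)
  also have "\<dots> = (\<Sum>d=1..card B. of_nat (card B choose d) * g d)"
  proof (rule sum.cong[OF refl])
    fix d assume "d \<in> {1..card B}"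
    have "(\<Sum>D\<in>{D. D \<subseteq> B \<and> card D = d}. g (card D)) = (\<Sum>D\<in>{D. D \<subseteq> B \<and> card D = d}. g d)"
      by (rule sum.cong) auto
    also have "\<dots> = of_nat (card {D. D \<subseteq> B \<and> card D = d}) * g d" by simp
    also have "\<dots> = of_nat (card B choose d) * g d" using n_subsets[OF assms] by simp
    finally show "(\<Sum>D\<in>{D. D \<subseteq> B \<and> card D = d}. g (card D)) = of_nat (card B choose d) * g d" .
  qed
  finally show ?thesis .
qed



definition lo :: "nat \<Rightarrow> nat set \<Rightarrow> nat" where "lo t A = card {x\<in>A. x \<le> t}"
definition hi :: "nat \<Rightarrow> nat set \<Rightarrow> nat" where "hi t A = card {x\<in>A. t < x}"

lemma exp_partial:
  fixes r :: real assumes "0 \<le> r"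
  shows "(\<Sum>d=1..a. r ^ d / fact d) \<le> exp r - 1"
proof -
  have "(\<Sum>d<Suc a. inverse (fact d) * r ^ d) \<le> (\<Sum>d. inverse (fact d) * r ^ d)"
    by (rule sum_le_suminf[OF summable_exp]) (use assms in auto)
  also have "\<dots> = exp r" by (simp add: exp_def scaleR_conv_of_real field_simps)
  finally have 1: "(\<Sum>d<Suc a. inverse (fact d) * r ^ d) \<le> exp r" .
  have "(\<Sum>d<Suc a. inverse (fact d) * r ^ d) = (\<Sum>d\<in>{0..a}. r ^ d / fact d)"
    by (simp add: atLeast0AtMost lessThan_Suc_atMost field_simps)
  also have "\<dots> = 1 + (\<Sum>d=1..a. r ^ d / fact d)" by (simp add: sum.atLeast_Suc_atMost)
  finally show ?thesis using 1 by simp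
qed

lemma choose_fact_real: "d \<le> a \<Longrightarrow> real (a choose d) * fact (a - d) = fact a / fact d"
proof -
  assume "d \<le> a"
  then have "fact d * fact (a - d) * real (a choose d) = fact a"
    using binomial_fact_lemma[of d a] by (metis of_nat_fact of_nat_mult)
  then show ?thesis by (simp add: field_simps)
qed

lemma phi_step:
  fixes u v :: real assumes "0 \<le> u" "0 \<le> v" "u * v \<le> 1"
  shows "max 1 v * u \<le> max 1 u"
proof (cases "v \<le> 1")
  case True then show ?thesis by simp
next
  case False then show ?thesis using assms by (simp add: mult.commute)
qed

lemma step_sum:
  fixes r :: real and Phi :: real
  assumes r: "0 \<le> r" and Phi: "0 \<le> Phi" and finB: "finite B"
  shows "(\<Sum>D\<in>{D. D \<subseteq> B \<and> D \<noteq> {}}. r ^ card D * (fact (card B - card D) * fact b * Phi))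
         \<le> fact (card B) * fact b * Phi * (exp r - 1)"
proof -
  have "(\<Sum>D\<in>{D. D \<subseteq> B \<and> D \<noteq> {}}. r ^ card D * (fact (card B - card D) * fact b * Phi))
      = (\<Sum>d=1..card B. real (card B choose d) * (r ^ d * (fact (card B - d) * fact b * Phi)))"
    using sum_subsets_by_card[OF finB, of "\<lambda>d. r ^ d * (fact (card B - d) * fact b * Phi)"] by simp
  also have "\<dots> = (\<Sum>d=1..card B. (fact (card B) * fact b * Phi) * (r ^ d / fact d))"
  proof (rule sum.cong[OF refl])
    fix d assume "d \<in> {1..card B}"
    then have "real (card B choose d) * fact (card B - d) = fact (card B) / fact d"
      by (intro choose_fact_real) auto
    then show "real (card B choose d) * (r ^ d * (fact (card B - d) * fact b * Phi)) =
          (fact (card B) * fact b * Phi) * (r ^ d / fact d)"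
      by (simp add: field_simps)
  qed
  also have "\<dots> = (fact (card B) * fact b * Phi) * (\<Sum>d=1..card B. r ^ d / fact d)"
    by (simp add: sum_distrib_left)
  also have "\<dots> \<le> fact (card B) * fact b * Phi * (exp r - 1)"
    by (rule mult_left_mono[OF exp_partial[OF r]]) (use Phi in auto)
  finally show ?thesis .
qed

lemma W_bound:
  fixes r s :: real
  assumes r: "0 \<le> r" and s: "0 \<le> s" and uv: "(exp r - 1) * (exp s - 1) \<le> 1"
    and fin: "finite A"
  shows "real (card (WL t A)) * r ^ lo t A * s ^ hi t A \<le> fact (lo t A) * fact (hi t A) * max 1 (exp r - 1)
       \<and> real (card (WH t A)) * r ^ lo t A * s ^ hi t A \<le> fact (lo t A) * fact (hi t A) * max 1 (exp s - 1)"
  using fin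
proof (induction A rule: finite_psubset_induct)
  case (psubset A)
  have u0: "0 \<le> exp r - 1" using r by simp
  have v0: "0 \<le> exp s - 1" using s by simp
  show ?case
  proof (cases "A = {}")
    case True
    have "WL t {} = {[]}" "WH t {} = {[]}" unfolding WL_def WH_def by auto
    then show ?thesis using True by (simp add: lo_def hi_def)
  next
    case False
    define AL where "AL = {x\<in>A. x \<le> t}"
    define AH where "AH = {x\<in>A. t < x}"
    have finAL: "finite AL" and finAH: "finite AH" using psubset(1) unfolding AL_def AH_def by auto
    have loA: "lo t A = card AL" and hiA: "hi t A = card AH" unfolding lo_def hi_def AL_def AH_def by auto
    have L: "real (card (WL t A)) * r ^ lo t A * s ^ hi t A \<le> fact (lo t A) * fact (hi t A) * max 1 (exp r - 1)"
    proof -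
      have "real (card (WL t A)) * r ^ lo t A * s ^ hi t A
          \<le> (\<Sum>D\<in>{D. D \<subseteq> AL \<and> D \<noteq> {}}. real (card (WH t (A - D)))) * (r ^ lo t A * s ^ hi t A)"
      proof -
        have c: "real (card (WL t A)) \<le> (\<Sum>D\<in>{D. D \<subseteq> AL \<and> D \<noteq> {}}. real (card (WH t (A - D))))"
          using card_WL_rec[OF psubset(1) False, of t] unfolding AL_def of_nat_sum[symmetric] of_nat_le_iff .
        show ?thesis using mult_right_mono[OF c, of "r ^ lo t A * s ^ hi t A"] r s by (simp add: mult.assoc)
      qed
      also have "\<dots> = (\<Sum>D\<in>{D. D \<subseteq> AL \<and> D \<noteq> {}}. r ^ card D * (real (card (WH t (A - D))) * r ^ lo t (A - D) * s ^ hi t (A - D)))"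
        unfolding sum_distrib_right
      proof (rule sum.cong[OF refl])
        fix D assume D: "D \<in> {D. D \<subseteq> AL \<and> D \<noteq> {}}"
        have "{x\<in>A - D. x \<le> t} = AL - D" unfolding AL_def by auto
        then have lo': "lo t (A - D) = card AL - card D" using D finAL
          by (simp add: lo_def, intro card_Diff_subset) (auto intro: finite_subset)
        have "{x\<in>A - D. t < x} = AH" unfolding AH_def using D unfolding AL_def by auto
        then have hi': "hi t (A - D) = card AH" by (simp add: hi_def)
        have "card D \<le> card AL" using D finAL card_mono by auto
        then have "r ^ card AL = r ^ card D * r ^ (card AL - card D)" by (simp add: power_add[symmetric])
        then show "real (card (WH t (A - D))) * (r ^ lo t A * s ^ hi t A) =
           r ^ card D * (real (card (WH t (A - D))) * r ^ lo t (A - D) * s ^ hi t (A - D))"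
          using lo' hi' loA hiA by simp
      qed
      also have "\<dots> \<le> (\<Sum>D\<in>{D. D \<subseteq> AL \<and> D \<noteq> {}}. r ^ card D * (fact (card AL - card D) * fact (card AH) * max 1 (exp s - 1)))"
      proof (rule sum_mono)
        fix D assume D: "D \<in> {D. D \<subseteq> AL \<and> D \<noteq> {}}"
        have "{x\<in>A - D. x \<le> t} = AL - D" unfolding AL_def by auto
        then have lo': "lo t (A - D) = card AL - card D" using D finAL
          by (simp add: lo_def, intro card_Diff_subset) (auto intro: finite_subset)
        have "{x\<in>A - D. t < x} = AH" unfolding AH_def using D unfolding AL_def by auto
        then have hi': "hi t (A - D) = card AH" by (simp add: hi_def)
        have "A - D \<subset> A" using D unfolding AL_def by auto
        then have "real (card (WH t (A - D))) * r ^ lo t (A - D) * s ^ hi t (A - D)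
             \<le> fact (lo t (A - D)) * fact (hi t (A - D)) * max 1 (exp s - 1)"
          using psubset(2) by blast
        then show "r ^ card D * (real (card (WH t (A - D))) * r ^ lo t (A - D) * s ^ hi t (A - D))
             \<le> r ^ card D * (fact (card AL - card D) * fact (card AH) * max 1 (exp s - 1))"
          using lo' hi' r by (intro mult_left_mono) auto
      qed
      also have "\<dots> \<le> fact (card AL) * fact (card AH) * max 1 (exp s - 1) * (exp r - 1)"
        by (rule step_sum[OF r _ finAL]) simp
      also have "\<dots> = fact (card AL) * fact (card AH) * (max 1 (exp s - 1) * (exp r - 1))" by simp
      also have "\<dots> \<le> fact (card AL) * fact (card AH) * max 1 (exp r - 1)"
        by (rule mult_left_mono[OF phi_step[OF u0 v0 uv]]) simp
      finally show ?thesis using loA hiA by simp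
    qed
    have H: "real (card (WH t A)) * r ^ lo t A * s ^ hi t A \<le> fact (lo t A) * fact (hi t A) * max 1 (exp s - 1)"
    proof -
      have "real (card (WH t A)) * r ^ lo t A * s ^ hi t A
          \<le> (\<Sum>D\<in>{D. D \<subseteq> AH \<and> D \<noteq> {}}. real (card (WL t (A - D)))) * (r ^ lo t A * s ^ hi t A)"
      proof -
        have c: "real (card (WH t A)) \<le> (\<Sum>D\<in>{D. D \<subseteq> AH \<and> D \<noteq> {}}. real (card (WL t (A - D))))"
          using card_WH_rec[OF psubset(1) False, of t] unfolding AH_def of_nat_sum[symmetric] of_nat_le_iff .
        show ?thesis using mult_right_mono[OF c, of "r ^ lo t A * s ^ hi t A"] r s by (simp add: mult.assoc)
      qed
      also have "\<dots> = (\<Sum>D\<in>{D. D \<subseteq> AH \<and> D \<noteq> {}}. s ^ card D * (real (card (WL t (A - D))) * r ^ lo t (A - D) * s ^ hi t (A - D)))"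
        unfolding sum_distrib_right
      proof (rule sum.cong[OF refl])
        fix D assume D: "D \<in> {D. D \<subseteq> AH \<and> D \<noteq> {}}"
        have "{x\<in>A - D. t < x} = AH - D" unfolding AH_def by auto
        then have hi': "hi t (A - D) = card AH - card D" using D finAH
          by (simp add: hi_def, intro card_Diff_subset) (auto intro: finite_subset)
        have "{x\<in>A - D. x \<le> t} = AL" unfolding AL_def using D unfolding AH_def by auto
        then have lo': "lo t (A - D) = card AL" by (simp add: lo_def)
        have "card D \<le> card AH" using D finAH card_mono by auto
        then have "s ^ card AH = s ^ card D * s ^ (card AH - card D)" by (simp add: power_add[symmetric])
        then show "real (card (WL t (A - D))) * (r ^ lo t A * s ^ hi t A) =
           s ^ card D * (real (card (WL t (A - D))) * r ^ lo t (A - D) * s ^ hi t (A - D))"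
          using lo' hi' loA hiA by simp
      qed
      also have "\<dots> \<le> (\<Sum>D\<in>{D. D \<subseteq> AH \<and> D \<noteq> {}}. s ^ card D * (fact (card AH - card D) * fact (card AL) * max 1 (exp r - 1)))"
      proof (rule sum_mono)
        fix D assume D: "D \<in> {D. D \<subseteq> AH \<and> D \<noteq> {}}"
        have "{x\<in>A - D. t < x} = AH - D" unfolding AH_def by auto
        then have hi': "hi t (A - D) = card AH - card D" using D finAH
          by (simp add: hi_def, intro card_Diff_subset) (auto intro: finite_subset)
        have "{x\<in>A - D. x \<le> t} = AL" unfolding AL_def using D unfolding AH_def by auto
        then have lo': "lo t (A - D) = card AL" by (simp add: lo_def)
        have "A - D \<subset> A" using D unfolding AH_def by auto
        then have "real (card (WL t (A - D))) * r ^ lo t (A - D) * s ^ hi t (A - D)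
             \<le> fact (lo t (A - D)) * fact (hi t (A - D)) * max 1 (exp r - 1)"
          using psubset(2) by blast
        then show "s ^ card D * (real (card (WL t (A - D))) * r ^ lo t (A - D) * s ^ hi t (A - D))
             \<le> s ^ card D * (fact (card AH - card D) * fact (card AL) * max 1 (exp r - 1))"
          using lo' hi' s by (intro mult_left_mono) (auto simp: mult_ac)
      qed
      also have "\<dots> \<le> fact (card AH) * fact (card AL) * max 1 (exp r - 1) * (exp s - 1)"
        by (rule step_sum[OF s _ finAH]) simp
      also have "\<dots> = fact (card AL) * fact (card AH) * (max 1 (exp r - 1) * (exp s - 1))" by simp
      also have "\<dots> \<le> fact (card AL) * fact (card AH) * max 1 (exp s - 1)"
        by (rule mult_left_mono[OF phi_step[OF v0 u0]]) (use uv in \<open>auto simp: mult.commute\<close>)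
      finally show ?thesis using loA hiA by simp
    qed
    show ?thesis using L H by blast
  qed
qed



definition TT :: "nat \<Rightarrow> nat \<Rightarrow> nat \<Rightarrow> nat" where
  "TT n t j = (n choose j) * t ^ j * (n - t) ^ (n - j)"

lemma choose_step: "(n choose Suc j) * Suc j = (n choose j) * (n - j)"
  using binomial_absorption[of j n] binomial_absorb_comp[of n j] by (simp add: mult.commute)

lemma TT_step: "j < n \<Longrightarrow> TT n t (Suc j) * (Suc j * (n - t)) = TT n t j * ((n - j) * t)"
proof -
  assume j: "j < n"
  have e: "(n - t) ^ (n - j) = (n - t) ^ (n - Suc j) * (n - t)"
    using j by (metis Suc_diff_Suc power_Suc2)
  have "TT n t (Suc j) * (Suc j * (n - t)) = ((n choose Suc j) * Suc j) * t * t ^ j * ((n - t) ^ (n - Suc j) * (n - t))"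
    unfolding TT_def power_Suc by (simp only: mult_ac)
  also have "\<dots> = (n choose j) * (n - j) * t * t ^ j * (n - t) ^ (n - j)" unfolding choose_step e ..
  also have "\<dots> = TT n t j * ((n - j) * t)" unfolding TT_def by (simp add: mult_ac)
  finally show ?thesis .
qed

lemma TT_up: "t \<le> n \<Longrightarrow> j < t \<Longrightarrow> TT n t j \<le> TT n t (Suc j)"
proof -
  assume tn: "t \<le> n" and jt: "j < t"
  show ?thesis
  proof (cases "n - t = 0")
    case True
    then have "TT n t j = 0" unfolding TT_def using jt tn by simp
    then show ?thesis by simp
  next
    case False
    have "(n - t) * Suc j \<le> (n - j) * t" by (rule mult_le_mono) (use jt tn in auto)
    then have "TT n t j * (Suc j * (n - t)) \<le> TT n t j * ((n - j) * t)" by (simp add: mult.commute)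
    also have "\<dots> = TT n t (Suc j) * (Suc j * (n - t))" using TT_step[of j n t] jt tn by simp
    finally show ?thesis using False by simp
  qed
qed

lemma TT_down: "t \<le> j \<Longrightarrow> j < n \<Longrightarrow> TT n t (Suc j) \<le> TT n t j"
proof -
  assume tj: "t \<le> j" and jn: "j < n"
  have pos: "0 < Suc j * (n - t)" using tj jn by simp
  have "TT n t (Suc j) * (Suc j * (n - t)) = TT n t j * ((n - j) * t)" using TT_step[OF jn] .
  also have "\<dots> \<le> TT n t j * (Suc j * (n - t))"
  proof (rule mult_le_mono2)
    show "(n - j) * t \<le> Suc j * (n - t)"
      using mult_le_mono[of "n - j" "n - t" t "Suc j"] tj jn by (simp add: mult.commute)
  qed
  finally have "TT n t (Suc j) * (Suc j * (n - t)) \<le> TT n t j * (Suc j * (n - t))" .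
  then show ?thesis using pos mult_le_cancel2 by blast
qed

lemma TT_max: assumes "t \<le> n" "j \<le> n" shows "TT n t j \<le> TT n t t"
proof (cases "j \<le> t")
  case True
  show ?thesis using True
  proof (induction j rule: inc_induct)
    case (step m)
    then show ?case using TT_up[OF assms(1) step(2)] by simp
  qed simp
next
  case False
  then have "t \<le> j" by simp
  then show ?thesis using assms(2)
  proof (induction j rule: dec_induct)
    case (step m)
    then show ?case using TT_down[of t m n] by simp
  qed simp
qed

lemma entropy_bound: assumes "t \<le> n"
  shows "n ^ n \<le> (n + 1) * ((n choose t) * t ^ t * (n - t) ^ (n - t))"
proof -
  have "n ^ n = (t + (n - t)) ^ n" using assms by simp
  also have "\<dots> = (\<Sum>j\<le>n. TT n t j)" unfolding binomial_ring TT_def by simp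
  also have "\<dots> \<le> (\<Sum>j\<le>n. TT n t t)" by (rule sum_mono) (use TT_max assms in auto)
  also have "\<dots> = (n + 1) * TT n t t" by simp
  finally show ?thesis unfolding TT_def using assms by simp
qed



lemma uv_bound:
  fixes r s c :: real
  assumes r: "0 \<le> r" and s: "0 \<le> s" and rs: "r + s = 2 * c" and c: "c \<le> ln 2"
  shows "(exp r - 1) * (exp s - 1) \<le> 1"
proof -
  have prod: "exp r * exp s = exp c * exp c" using rs by (simp add: exp_add[symmetric])
  have "(exp r + exp s)^2 \<ge> (2 * exp c)^2"
  proof -
    have "(exp r + exp s)^2 = (exp r - exp s)^2 + 4 * (exp r * exp s)" by (simp add: power2_eq_square algebra_simps)
    also have "\<dots> \<ge> 4 * (exp r * exp s)" by simp
    finally show ?thesis using prod by (simp add: power2_eq_square)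
  qed
  then have sum: "exp r + exp s \<ge> 2 * exp c"
    by (rule power2_le_imp_le) simp
  have "exp c \<le> exp (ln 2)" using c exp_le_cancel_iff by blast
  then have c2: "exp c \<le> 2" by simp
  have c1: "1 \<le> exp c" using r s rs by simp
  have "(exp r - 1) * (exp s - 1) = exp r * exp s - (exp r + exp s) + 1" by (simp add: algebra_simps)
  also have "\<dots> \<le> exp c * exp c - 2 * exp c + 1" using prod sum by simp
  also have "\<dots> = (exp c - 1) * (exp c - 1)" by (simp add: algebra_simps)
  also have "\<dots> \<le> 1 * 1" using c1 c2 by (intro mult_mono) auto
  finally show ?thesis by simp
qed

lemma phi_sum_bound:
  fixes r s c :: real
  assumes r: "0 \<le> r" and s: "0 \<le> s" and rs: "r + s = 2 * c" and c: "c \<le> ln 2"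
  shows "max 1 (exp r - 1) + max 1 (exp s - 1) \<le> 6"
proof -
  have "exp (2 * c) \<le> 4"
  proof -
    have "exp (2 * c) = exp c * exp c" by (simp add: exp_add[symmetric])
    moreover have "exp c \<le> exp (ln 2)" using c exp_le_cancel_iff by blast
    then have "exp c \<le> 2" by simp
    then have "exp c * exp c \<le> 2 * 2" by (intro mult_mono) auto
    ultimately show ?thesis by simp
  qed
  moreover have "exp r \<le> exp (2 * c)" "exp s \<le> exp (2 * c)" using r s rs by auto
  ultimately have "exp r \<le> 4" "exp s \<le> 4" by linarith+
  then show ?thesis by linarith
qed

lemma lo_range: "t \<le> n \<Longrightarrow> lo t {1..n} = t"
proof -
  assume "t \<le> n"
  then have "{x\<in>{1..n}. x \<le> t} = {1..t}" by auto
  then show ?thesis unfolding lo_def by simp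
qed

lemma hi_range: "t \<le> n \<Longrightarrow> hi t {1..n} = n - t"
proof -
  assume "t \<le> n"
  then have "{x\<in>{1..n}. t < x} = {t+1..n}" by auto
  then show ?thesis unfolding hi_def by simp
qed

lemma card_V_bound:
  fixes c :: real
  assumes c0: "0 < c" and c: "c \<le> ln 2" and tn: "t \<le> n" and n: "1 \<le> n"
  shows "real (card (V t {1..n})) * (2 * c) ^ n \<le> 6 * (n + 1) * fact n"
proof -
  define r where "r = 2 * c * t / n"
  define s where "s = 2 * c * real (n - t) / n"
  have r0: "0 \<le> r" and s0: "0 \<le> s" unfolding r_def s_def using c0 tn by auto
  have rs: "r + s = 2 * c" unfolding r_def s_def using n tn by (simp add: field_simps of_nat_diff)
  have uv: "(exp r - 1) * (exp s - 1) \<le> 1" by (rule uv_bound[OF r0 s0 rs c])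
  have W: "real (card (WL t {1..n})) * r ^ t * s ^ (n - t) \<le> fact t * fact (n - t) * max 1 (exp r - 1)"
          "real (card (WH t {1..n})) * r ^ t * s ^ (n - t) \<le> fact t * fact (n - t) * max 1 (exp s - 1)"
    using W_bound[OF r0 s0 uv, of "{1..n}" t] lo_range[OF tn] hi_range[OF tn] by auto
  have cV: "card (V t {1..n}) \<le> card (WL t {1..n}) + card (WH t {1..n})"
    by (rule order_trans[OF card_mono[OF _ V_sub] card_Un_le]) (auto intro: WL_fin WH_fin)
  have rsp: "0 \<le> r ^ t * s ^ (n - t)" using r0 s0 by simp
  have A: "real (card (V t {1..n})) * (r ^ t * s ^ (n - t)) \<le> 6 * (fact t * fact (n - t))"
  proof -
    have "real (card (V t {1..n})) * (r ^ t * s ^ (n - t))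
        \<le> (real (card (WL t {1..n})) + real (card (WH t {1..n}))) * (r ^ t * s ^ (n - t))"
      by (rule mult_right_mono[OF _ rsp]) (use cV in linarith)
    also have "\<dots> \<le> fact t * fact (n - t) * (max 1 (exp r - 1) + max 1 (exp s - 1))"
      using W by (simp add: algebra_simps)
    also have "\<dots> \<le> fact t * fact (n - t) * 6"
      by (rule mult_left_mono[OF phi_sum_bound[OF r0 s0 rs c]]) simp
    finally show ?thesis by simp
  qed
  define P :: real where "P = real t ^ t * real (n - t) ^ (n - t)"
  have p1: "0 < real t ^ t" by (cases "t = 0") auto
  have p2: "0 < real (n - t) ^ (n - t)" by (cases "n - t = 0") auto
  have Ppos: "0 < P" unfolding P_def using p1 p2 by simp
  have rsP: "r ^ t * s ^ (n - t) * real n ^ n = (2 * c) ^ n * P"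
  proof -
    have nn: "real n ^ n = real n ^ t * real n ^ (n - t)" using tn by (simp add: power_add[symmetric])
    have np: "0 < real n" using n by simp
    have "r ^ t * s ^ (n - t) * real n ^ n = (r * real n) ^ t * (s * real n) ^ (n - t)"
      unfolding nn power_mult_distrib by (simp only: mult_ac)
    also have "r * real n = 2 * c * real t" unfolding r_def using np by simp
    also have "s * real n = 2 * c * real (n - t)" unfolding s_def using np by simp
    also have "(2 * c * real t) ^ t * (2 * c * real (n - t)) ^ (n - t) = ((2 * c) ^ t * (2 * c) ^ (n - t)) * P"
      unfolding P_def power_mult_distrib by (simp only: mult_ac)
    also have "(2 * c) ^ t * (2 * c) ^ (n - t) = (2 * c) ^ n" using tn by (simp only: power_add[symmetric] le_add_diff_inverse)
    finally show ?thesis .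
  qed
  have ent: "real n ^ n \<le> (n + 1) * (real (n choose t) * P)"
  proof -
    have "real (n ^ n) \<le> real ((n + 1) * ((n choose t) * t ^ t * (n - t) ^ (n - t)))"
      using entropy_bound[OF tn] by (simp only: of_nat_le_iff)
    then show ?thesis unfolding P_def by (simp add: algebra_simps)
  qed
  have "real (card (V t {1..n})) * (2 * c) ^ n * P = real (card (V t {1..n})) * (r ^ t * s ^ (n - t)) * real n ^ n"
    using rsP by (simp add: mult_ac)
  also have "\<dots> \<le> 6 * (fact t * fact (n - t)) * real n ^ n"
    by (rule mult_right_mono[OF A]) simp
  also have "\<dots> \<le> 6 * (fact t * fact (n - t)) * ((n + 1) * (real (n choose t) * P))"
    by (rule mult_left_mono[OF ent]) simp
  also have "\<dots> = 6 * (n + 1) * (fact t * fact (n - t) * real (n choose t)) * P" by (simp add: mult_ac)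
  also have "fact t * fact (n - t) * real (n choose t) = fact n"
    using binomial_fact_lemma[OF tn] by (metis of_nat_fact of_nat_mult)
  finally show ?thesis using Ppos by simp
qed

lemma alpha_upper:
  fixes c :: real
  assumes c0: "0 < c" and c: "c \<le> ln 2"
  shows "real (alpha n) * (2 * c) ^ n \<le> 6 * (n + 1) ^ 2 * fact n"
proof (cases "n = 0")
  case True
  have "V 0 {1..0} = {[]}" unfolding V_def by auto
  then have "alpha 0 \<le> 1" using alpha_le[of 0] by simp
  then show ?thesis using True by simp
next
  case False
  have "real (alpha n) * (2 * c) ^ n \<le> (\<Sum>t\<le>n. real (card (V t {1..n}))) * (2 * c) ^ n"
    using alpha_le[of n] c0 by (intro mult_right_mono) (simp_all only: of_nat_sum[symmetric] of_nat_le_iff, simp)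
  also have "\<dots> = (\<Sum>t\<le>n. real (card (V t {1..n})) * (2 * c) ^ n)" by (simp add: sum_distrib_right)
  also have "\<dots> \<le> (\<Sum>t\<le>n. (6 * (n + 1) * fact n :: real))"
    by (rule sum_mono) (use card_V_bound[OF c0 c] False in auto)
  also have "\<dots> = 6 * (n + 1) ^ 2 * fact n" by (simp add: power2_eq_square algebra_simps)
  finally show ?thesis .
qed



definition perm_of :: "nat \<Rightarrow> nat list \<Rightarrow> nat \<Rightarrow> nat" where
  "perm_of n xs = (\<lambda>i. if 1 \<le> i \<and> i \<le> n then xs ! (i - 1) else i)"

lemma perm_of_permutes:
  assumes d: "distinct xs" and s: "set xs = {1..n}"
  shows "perm_of n xs permutes {1..n}"
proof (rule bij_imp_permutes)
  have len: "length xs = n" using distinct_card[OF d] s by simp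
  have inj: "inj_on (perm_of n xs) {1..n}"
  proof (rule inj_onI)
    fix i j assume i: "i \<in> {1..n}" and j: "j \<in> {1..n}" and e: "perm_of n xs i = perm_of n xs j"
    then have "xs ! (i - 1) = xs ! (j - 1)" unfolding perm_of_def by auto
    moreover have "i - 1 < length xs" "j - 1 < length xs" using len i j by auto
    ultimately have "i - 1 = j - 1" using d nth_eq_iff_index_eq by blast
    then show "i = j" using i j by auto
  qed
  have img: "perm_of n xs ` {1..n} \<subseteq> {1..n}"
  proof
    fix y assume "y \<in> perm_of n xs ` {1..n}"
    then obtain i where i: "i \<in> {1..n}" "y = perm_of n xs i" by blast
    then have "y = xs ! (i - 1)" unfolding perm_of_def by auto
    then have "y \<in> set xs" using i len by auto
    then show "y \<in> {1..n}" using s by simp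
  qed
  show "bij_betw (perm_of n xs) {1..n} {1..n}"
    unfolding bij_betw_def using inj endo_inj_surj[OF _ img inj] by simp
next
  fix x assume "x \<notin> {1..n}"
  then show "perm_of n xs x = x" unfolding perm_of_def by auto
qed

lemma perm_of_avoids:
  assumes "xs \<in> V t {1..n}"
  shows "\<not> contains_21_34 n (perm_of n xs) \<and> \<not> contains_34_21 n (perm_of n xs)"
proof -
  have d: "distinct xs" and s: "set xs = {1..n}" and v: "valid t xs" using assms unfolding V_def by auto
  have len: "length xs = n" using distinct_card[OF d] s by simp
  let ?p = "perm_of n xs"
  have pi: "\<And>i. 1 \<le> i \<Longrightarrow> i < n \<Longrightarrow> ?p i = xs ! (i - 1) \<and> ?p (i + 1) = xs ! i"
    unfolding perm_of_def by auto
  have desc: "\<And>i. 1 \<le> i \<Longrightarrow> i < n \<Longrightarrow> ?p (i + 1) < ?p i \<Longrightarrow> t < ?p i"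
  proof -
    fix i assume i: "1 \<le> i" "i < n" "?p (i + 1) < ?p i"
    have "(xs ! (i - 1) \<le> t) = (xs ! (i - 1) < xs ! Suc (i - 1))" using v len i unfolding valid_nth by auto
    then show "t < ?p i" using pi[OF i(1,2)] i by auto
  qed
  have asc: "\<And>i. 1 \<le> i \<Longrightarrow> i < n \<Longrightarrow> ?p i < ?p (i + 1) \<Longrightarrow> ?p i \<le> t"
  proof -
    fix i assume i: "1 \<le> i" "i < n" "?p i < ?p (i + 1)"
    have "(xs ! (i - 1) \<le> t) = (xs ! (i - 1) < xs ! Suc (i - 1))" using v len i unfolding valid_nth by auto
    then show "?p i \<le> t" using pi[OF i(1,2)] i by auto
  qed
  have c1: "\<not> contains_21_34 n ?p"
  proof
    assume "contains_21_34 n ?p"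
    then obtain i j where ij: "1 \<le> i" "i + 1 < j" "j + 1 \<le> n" "?p (i+1) < ?p i" "?p i < ?p j" "?p j < ?p (j+1)"
      unfolding contains_21_34_def by blast
    have "t < ?p i" using desc[of i] ij by auto
    moreover have "?p j \<le> t" using asc[of j] ij by auto
    ultimately show False using ij by auto
  qed
  have c2: "\<not> contains_34_21 n ?p"
  proof
    assume "contains_34_21 n ?p"
    then obtain i j where ij: "1 \<le> i" "i + 1 < j" "j + 1 \<le> n" "?p (j+1) < ?p j" "?p j < ?p i" "?p i < ?p (i+1)"
      unfolding contains_34_21_def by blast
    have "t < ?p j" using desc[of j] ij by auto
    moreover have "?p i \<le> t" using asc[of i] ij by auto
    ultimately show False using ij by auto
  qed
  show ?thesis using c1 c2 by blast
qed

lemma alpha_ge_V: "card (V t {1..n}) \<le> alpha n"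
proof -
  have inj: "inj_on (perm_of n) (V t {1..n})"
  proof (rule inj_onI)
    fix xs ys assume xs: "xs \<in> V t {1..n}" and ys: "ys \<in> V t {1..n}" and e: "perm_of n xs = perm_of n ys"
    have lx: "length xs = n" and ly: "length ys = n"
      using xs ys distinct_card unfolding V_def by force+
    show "xs = ys"
    proof (rule nth_equalityI)
      show "length xs = length ys" using lx ly by simp
      fix i assume "i < length xs"
      then have "perm_of n xs (i + 1) = xs ! i" "perm_of n ys (i + 1) = ys ! i"
        using lx unfolding perm_of_def by auto
      then show "xs ! i = ys ! i" using e by simp
    qed
  qed
  have sub: "perm_of n ` V t {1..n} \<subseteq> {p. p permutes {1..n} \<and> \<not> contains_21_34 n p \<and> \<not> contains_34_21 n p}"
    using perm_of_permutes perm_of_avoids unfolding V_def by blast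
  have fin: "finite {p. p permutes {1..n} \<and> \<not> contains_21_34 n p \<and> \<not> contains_34_21 n p}"
    by (rule finite_subset[of _ "{p. p permutes {1..n}}"]) (auto simp: finite_permutations)
  have "card (V t {1..n}) = card (perm_of n ` V t {1..n})" using card_image[OF inj] by simp
  also have "\<dots> \<le> alpha n" unfolding alpha_def by (rule card_mono[OF fin sub])
  finally show ?thesis .
qed



fun acount :: "nat \<Rightarrow> nat \<Rightarrow> nat" where
  "acount n 0 = (if n = 0 then 1 else 0)"
| "acount n (Suc k) = (\<Sum>d=1..n. (n choose d) * acount (n - d) k)"

fun osp :: "nat set \<Rightarrow> nat \<Rightarrow> nat set list set" where
  "osp A 0 = (if A = {} then {[]} else {})"
| "osp A (Suc k) = (\<Union>D\<in>{D. D \<subseteq> A \<and> D \<noteq> {}}. (\<lambda>Ps. D # Ps) ` osp (A - D) k)"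

lemma osp_fin: "finite A \<Longrightarrow> finite (osp A k)"
  by (induction k arbitrary: A) auto

lemma card_osp: "finite A \<Longrightarrow> card (osp A k) = acount (card A) k"
proof (induction k arbitrary: A)
  case 0 then show ?case by simp
next
  case (Suc k)
  have "card (osp A (Suc k)) = (\<Sum>D\<in>{D. D \<subseteq> A \<and> D \<noteq> {}}. card ((\<lambda>Ps. D # Ps) ` osp (A - D) k))"
    unfolding osp.simps
    by (rule card_UN_disjoint) (use Suc.prems osp_fin in auto)
  also have "\<dots> = (\<Sum>D\<in>{D. D \<subseteq> A \<and> D \<noteq> {}}. acount (card A - card D) k)"
  proof (rule sum.cong[OF refl])
    fix D assume D: "D \<in> {D. D \<subseteq> A \<and> D \<noteq> {}}"
    have "card ((\<lambda>Ps. D # Ps) ` osp (A - D) k) = card (osp (A - D) k)" by (rule card_image) (simp add: inj_on_def)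
    also have "\<dots> = acount (card (A - D)) k" using Suc.IH Suc.prems by simp
    also have "card (A - D) = card A - card D" using D Suc.prems by (intro card_Diff_subset) (auto intro: finite_subset)
    finally show "card ((\<lambda>Ps. D # Ps) ` osp (A - D) k) = acount (card A - card D) k" .
  qed
  also have "\<dots> = (\<Sum>d=1..card A. (card A choose d) * acount (card A - d) k)"
    using sum_subsets_by_card[OF Suc.prems, of "\<lambda>d. acount (card A - d) k"] by simp
  finally show ?case by simp
qed

fun build :: "nat set list \<Rightarrow> nat set list \<Rightarrow> nat list" where
  "build (P # Ps) (Q # Qs) = sorted_list_of_set P @ rev (sorted_list_of_set Q) @ build Ps Qs"
| "build _ _ = []"

lemma valid_low: "sorted_wrt (<) xs \<Longrightarrow> (\<forall>x\<in>set xs. x \<le> t) \<Longrightarrow> valid t xs"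
  by (induction t xs rule: valid.induct) auto

lemma valid_high: "sorted_wrt (>) xs \<Longrightarrow> (\<forall>x\<in>set xs. t < x) \<Longrightarrow> valid t xs"
  by (induction t xs rule: valid.induct) auto

lemma build_props:
  assumes "Ps \<in> osp L k" "Qs \<in> osp H k" "finite L" "finite H" "\<forall>x\<in>L. x \<le> t" "\<forall>x\<in>H. t < x"
  shows "distinct (build Ps Qs) \<and> set (build Ps Qs) = L \<union> H \<and> valid t (build Ps Qs)
         \<and> (build Ps Qs = [] \<or> hd (build Ps Qs) \<le> t)"
  using assms
proof (induction k arbitrary: L H Ps Qs)
  case 0 then show ?case by (auto split: if_splits)
next
  case (Suc k)
  from Suc.prems(1) obtain D Ps' where D: "D \<subseteq> L" "D \<noteq> {}" and Ps: "Ps = D # Ps'" and Ps': "Ps' \<in> osp (L - D) k"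
    by auto
  from Suc.prems(2) obtain E Qs' where E: "E \<subseteq> H" "E \<noteq> {}" and Qs: "Qs = E # Qs'" and Qs': "Qs' \<in> osp (H - E) k"
    by auto
  have fD: "finite D" and fE: "finite E" using D E Suc.prems(3,4) finite_subset by auto
  note IH = Suc.IH[OF Ps' Qs'] Suc.prems(3-6)
  let ?R = "build Ps' Qs'"
  have R: "distinct ?R" "set ?R = (L - D) \<union> (H - E)" "valid t ?R" "?R = [] \<or> hd ?R \<le> t"
    using IH by auto
  let ?a = "sorted_list_of_set D" and ?b = "rev (sorted_list_of_set E)"
  have sa: "set ?a = D" and sb: "set ?b = E" using fD fE by auto
  have a_ne: "?a \<noteq> []" and b_ne: "?b \<noteq> []" using fD fE D E by auto
  have va: "valid t ?a" by (rule valid_low) (use D Suc.prems(5) sa in auto)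
  have vb: "valid t ?b" by (rule valid_high) (use E Suc.prems(6) sb in \<open>auto simp: sorted_wrt_rev\<close>)
  have lastb: "t < last ?b" using b_ne sb E Suc.prems(6) last_in_set by blast
  have hdb: "t < hd ?b" using b_ne sb E Suc.prems(6) hd_in_set by blast
  have lasta: "last ?a \<le> t" using a_ne sa D Suc.prems(5) last_in_set by blast
  have v2: "valid t (?b @ ?R)" unfolding valid_append using vb R(3) R(4) lastb by auto
  have hd2: "hd (?b @ ?R) = hd ?b" using b_ne by simp
  have v3: "valid t (?a @ ?b @ ?R)" unfolding valid_append[of t ?a] using va v2 lasta hd2 hdb b_ne by auto
  have dist: "distinct (?a @ ?b @ ?R)"
    using R(1,2) sa sb D E Suc.prems(5,6) by (auto simp: distinct_append) (meson not_le subsetD)+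
  have st: "set (?a @ ?b @ ?R) = L \<union> H" using R(2) sa sb D E by auto
  have hd: "hd (?a @ ?b @ ?R) \<le> t" using a_ne sa D Suc.prems(5) hd_in_set by fastforce
  show ?case using Ps Qs v3 dist st hd by simp
qed

lemma split_unique:
  assumes "\<forall>x\<in>set a. P x" "\<forall>x\<in>set a'. P x" "b = [] \<or> \<not> P (hd b)" "b' = [] \<or> \<not> P (hd b')"
    and "a @ b = a' @ b'"
  shows "a = a' \<and> b = b'"
proof -
  have tb: "takeWhile P b = []" using assms(3) by (cases b) auto
  have tb': "takeWhile P b' = []" using assms(4) by (cases b') auto
  have "takeWhile P (a @ b) = a" using assms(1) tb by simp
  moreover have "takeWhile P (a' @ b') = a'" using assms(2) tb' by simp
  ultimately have "a = a'" using assms(5) by simp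
  then show ?thesis using assms(5) by simp
qed

lemma build_inj:
  assumes "Ps \<in> osp L k" "Qs \<in> osp H k" "Ps2 \<in> osp L k" "Qs2 \<in> osp H k"
    "finite L" "finite H" "\<forall>x\<in>L. x \<le> t" "\<forall>x\<in>H. t < x"
    "build Ps Qs = build Ps2 Qs2"
  shows "Ps = Ps2 \<and> Qs = Qs2"
  using assms
proof (induction k arbitrary: L H Ps Qs Ps2 Qs2)
  case 0 then show ?case by (auto split: if_splits)
next
  case (Suc k)
  from Suc.prems(1) obtain D Ps' where D: "D \<subseteq> L" "D \<noteq> {}" and Ps: "Ps = D # Ps'" and Ps': "Ps' \<in> osp (L - D) k"
    by auto
  from Suc.prems(2) obtain E Qs' where E: "E \<subseteq> H" "E \<noteq> {}" and Qs: "Qs = E # Qs'" and Qs': "Qs' \<in> osp (H - E) k"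
    by auto
  from Suc.prems(3) obtain D2 Ps2' where D2: "D2 \<subseteq> L" "D2 \<noteq> {}" and Ps2: "Ps2 = D2 # Ps2'" and Ps2': "Ps2' \<in> osp (L - D2) k"
    by auto
  from Suc.prems(4) obtain E2 Qs2' where E2: "E2 \<subseteq> H" "E2 \<noteq> {}" and Qs2: "Qs2 = E2 # Qs2'" and Qs2': "Qs2' \<in> osp (H - E2) k"
    by auto
  have fin: "finite D" "finite E" "finite D2" "finite E2" using D(1) E(1) D2(1) E2(1) Suc.prems(5,6) by (auto intro: finite_subset)
  have R1: "build Ps' Qs' = [] \<or> hd (build Ps' Qs') \<le> t"
    using build_props[OF Ps' Qs'] Suc.prems(5-8) by auto
  have R2: "build Ps2' Qs2' = [] \<or> hd (build Ps2' Qs2') \<le> t"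
    using build_props[OF Ps2' Qs2'] Suc.prems(5-8) by auto
  let ?a = "sorted_list_of_set D" and ?b = "rev (sorted_list_of_set E)"
  let ?a2 = "sorted_list_of_set D2" and ?b2 = "rev (sorted_list_of_set E2)"
  have b_ne: "?b \<noteq> []" "?b2 \<noteq> []" using fin E E2 by auto
  have hb: "t < hd ?b" "t < hd ?b2"
    using b_ne fin E E2 Suc.prems(8) hd_in_set by (metis set_rev sorted_list_of_set(1) subsetD)+
  have eq: "?a @ (?b @ build Ps' Qs') = ?a2 @ (?b2 @ build Ps2' Qs2')" using Suc.prems(9) Ps Qs Ps2 Qs2 by simp
  have s1: "?a = ?a2 \<and> ?b @ build Ps' Qs' = ?b2 @ build Ps2' Qs2'"
    by (rule split_unique[of _ "\<lambda>x. x \<le> t", OF _ _ _ _ eq]) (use fin D D2 Suc.prems(7) hb b_ne in auto)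
  have s2: "?b = ?b2 \<and> build Ps' Qs' = build Ps2' Qs2'"
    by (rule split_unique[of _ "\<lambda>x. t < x", OF _ _ _ _ conjunct2[OF s1]]) (use fin E E2 Suc.prems(8) R1 R2 in auto)
  have DD: "D = D2" using s1 fin by (metis sorted_list_of_set(1))
  have EE: "E = E2" using s2 fin by (metis set_rev sorted_list_of_set(1))
  have "Ps' = Ps2' \<and> Qs' = Qs2'"
    by (rule Suc.IH[OF Ps' Qs']) (use Ps2' Qs2' DD EE Suc.prems(5-8) conjunct2[OF s2] in auto)
  then show ?case using Ps Qs Ps2 Qs2 DD EE by simp
qed

lemma alpha_ge_acount: "acount (n div 2) k ^ 2 \<le> alpha n"
proof -
  define h where "h = n div 2"
  define L where "L = {1..h}"
  define H where "H = {h+1..2*h}"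
  define pre where "pre = (if odd n then [n] else [])"
  have fL: "finite L" and fH: "finite H" unfolding L_def H_def by auto
  have Lt: "\<forall>x\<in>L. x \<le> h" and Ht: "\<forall>x\<in>H. h < x" unfolding L_def H_def by auto
  define f where "f = (\<lambda>(Ps, Qs). pre @ build Ps Qs)"
  have into: "f ` (osp L k \<times> osp H k) \<subseteq> V h {1..n}"
  proof
    fix xs assume "xs \<in> f ` (osp L k \<times> osp H k)"
    then obtain Ps Qs where PQ: "Ps \<in> osp L k" "Qs \<in> osp H k" and xs: "xs = pre @ build Ps Qs"
      unfolding f_def by auto
    note bp = build_props[OF PQ fL fH Lt Ht]
    have LH: "L \<union> H = {1..2*h}" unfolding L_def H_def by auto
    have vpre: "valid h (pre @ build Ps Qs)"
    proof (cases "odd n")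
      case True
      have "h < n" unfolding h_def using True by presburger
      then show ?thesis unfolding pre_def valid_append using True bp by auto
    next
      case False then show ?thesis unfolding pre_def using bp by simp
    qed
    have dpre: "distinct (pre @ build Ps Qs)"
    proof (cases "odd n")
      case True
      have "n \<notin> L \<union> H" unfolding LH h_def using True by presburger
      then show ?thesis unfolding pre_def using True bp by auto
    next
      case False then show ?thesis unfolding pre_def using bp by simp
    qed
    have spre: "set (pre @ build Ps Qs) = {1..n}"
    proof (cases "odd n")
      case True
      have "n = 2 * h + 1" unfolding h_def using True by presburger
      then show ?thesis unfolding pre_def using True bp LH by auto
    next
      case False
      have "n = 2 * h" unfolding h_def using False by presburger
      then show ?thesis unfolding pre_def using False bp LH by auto
    qed
    show "xs \<in> V h {1..n}" unfolding V_def xs using vpre dpre spre by simp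
  qed
  have inj: "inj_on f (osp L k \<times> osp H k)"
  proof (rule inj_onI)
    fix x y assume x: "x \<in> osp L k \<times> osp H k" and y: "y \<in> osp L k \<times> osp H k" and e: "f x = f y"
    obtain Ps Qs where x': "x = (Ps, Qs)" by (cases x)
    obtain Ps2 Qs2 where y': "y = (Ps2, Qs2)" by (cases y)
    have "build Ps Qs = build Ps2 Qs2" using e unfolding f_def x' y' by simp
    then show "x = y" using build_inj[of Ps L k Qs H Ps2 Qs2 h] x y fL fH Lt Ht unfolding x' y' by auto
  qed
  have "acount h k ^ 2 = card (osp L k) * card (osp H k)"
    using card_osp[OF fL, of k] card_osp[OF fH, of k] unfolding L_def H_def by (simp add: power2_eq_square)
  also have "\<dots> = card (f ` (osp L k \<times> osp H k))"
    using card_image[OF inj] card_cartesian_product by metis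
  also have "\<dots> \<le> card (V h {1..n})"
    by (rule card_mono[OF _ into]) (auto intro: finite_subset[OF _ lists_fin] simp: V_def)
  also have "\<dots> \<le> alpha n" by (rule alpha_ge_V)
  finally show ?thesis unfolding h_def .
qed



lemma acount_zero: "m < k \<Longrightarrow> acount m k = 0"
proof (induction k arbitrary: m)
  case 0 then show ?case by simp
next
  case (Suc k)
  have "\<And>d. d \<in> {1..m} \<Longrightarrow> (m choose d) * acount (m - d) k = 0"
    using Suc by (intro mult_eq_0_iff[THEN iffD2] disjI2 Suc.IH) auto
  then show ?case by simp
qed

lemma acount_one: "1 \<le> m \<Longrightarrow> acount m 1 = 1"
proof -
  assume m: "1 \<le> m"
  have "acount m 1 = (\<Sum>d=1..m. (m choose d) * acount (m - d) 0)" by (simp add: One_nat_def)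
  also have "\<dots> = (\<Sum>d=1..m. (if d = m then 1 else 0))"
    by (rule sum.cong[OF refl]) auto
  also have "\<dots> = 1" using m by simp
  finally show ?thesis .
qed

definition Fub :: "nat \<Rightarrow> nat" where "Fub h = (\<Sum>k\<le>h. acount h k)"

lemma Fub_ge1: "1 \<le> Fub h"
proof (cases "h = 0")
  case True then show ?thesis by (simp add: Fub_def)
next
  case False
  then have "acount h 1 = 1" using acount_one by simp
  moreover have "acount h 1 \<le> Fub h" unfolding Fub_def
    by (rule member_le_sum) (use False in auto)
  ultimately show ?thesis by simp
qed

lemma Fub_rec: "1 \<le> h \<Longrightarrow> Fub h = (\<Sum>d=1..h. (h choose d) * Fub (h - d))"
proof -
  assume h1: "1 \<le> h"
  then obtain h' where h': "h = Suc h'" by (cases h) auto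
  have "Fub h = acount h 0 + (\<Sum>k\<le>h'. acount h (Suc k))" unfolding Fub_def h' sum.atMost_Suc_shift by simp
  also have "acount h 0 = 0" using h' by simp
  also have "(\<Sum>k\<le>h'. acount h (Suc k)) = (\<Sum>k\<le>h'. \<Sum>d=1..h. (h choose d) * acount (h - d) k)" by simp
  also have "\<dots> = (\<Sum>d=1..h. \<Sum>k\<le>h'. (h choose d) * acount (h - d) k)" by (rule sum.swap)
  also have "\<dots> = (\<Sum>d=1..h. (h choose d) * Fub (h - d))"
  proof (rule sum.cong[OF refl])
    fix d assume d: "d \<in> {1..h}"
    have "(\<Sum>k\<le>h'. acount (h - d) k) = (\<Sum>k\<le>h - d. acount (h - d) k)"
      by (rule sum.mono_neutral_right) (use d h' acount_zero in auto)
    then show "(\<Sum>k\<le>h'. (h choose d) * acount (h - d) k) = (h choose d) * Fub (h - d)"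
      unfolding Fub_def by (simp add: sum_distrib_left[symmetric])
  qed
  finally show ?thesis by simp
qed

lemma fub_lower:
  fixes y :: real
  assumes y: "0 < y" and b: "1 \<le> (\<Sum>d=1..b. y ^ d / fact d)"
  shows "(min 1 (y ^ b) / fact b) * fact h \<le> real (Fub h) * y ^ h"
proof (induction h rule: less_induct)
  case (less h)
  define C where "C = min 1 (y ^ b) / fact b"
  have C0: "0 \<le> C" unfolding C_def using y by simp
  show ?case
  proof (cases "h \<le> b")
    case True
    have "y ^ h \<ge> min 1 (y ^ b)"
    proof (cases "y \<le> 1")
      case True
      then have "y ^ b \<le> y ^ h" using \<open>h \<le> b\<close> y by (intro power_decreasing) auto
      then show ?thesis by simp
    next
      case False
      then have "1 \<le> y ^ h" by simp
      then show ?thesis by simp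
    qed
    moreover have "fact h \<le> (fact b :: real)" using True by (simp add: fact_mono)
    ultimately have fh: "fact h / fact b \<le> (1::real)" by simp
    have m0: "0 \<le> min 1 (y ^ b)" using y by simp
    have "C * fact h = min 1 (y ^ b) * (fact h / fact b)" unfolding C_def by simp
    also have "\<dots> \<le> min 1 (y ^ b) * 1" by (rule mult_left_mono[OF fh m0])
    finally have "C * fact h \<le> min 1 (y ^ b)" by simp
    also have "\<dots> \<le> y ^ h" using \<open>y ^ h \<ge> min 1 (y ^ b)\<close> .
    also have "\<dots> \<le> real (Fub h) * y ^ h" using Fub_ge1[of h] y by simp
    finally show ?thesis unfolding C_def .
  next
    case False
    then have h1: "1 \<le> h" by simp
    have "real (Fub h) * y ^ h = (\<Sum>d=1..h. real (h choose d) * (real (Fub (h - d)) * y ^ (h - d)) * y ^ d)"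
    proof -
      have "real (Fub h) * y ^ h = (\<Sum>d=1..h. real (h choose d) * real (Fub (h - d))) * y ^ h"
        using Fub_rec[OF h1] by (simp only: of_nat_mult[symmetric] of_nat_sum[symmetric])
      also have "\<dots> = (\<Sum>d=1..h. real (h choose d) * real (Fub (h - d)) * y ^ h)" by (simp add: sum_distrib_right)
      also have "\<dots> = (\<Sum>d=1..h. real (h choose d) * (real (Fub (h - d)) * y ^ (h - d)) * y ^ d)"
      proof (rule sum.cong[OF refl])
        fix d assume "d \<in> {1..h}"
        then have "y ^ h = y ^ (h - d) * y ^ d" by (simp add: power_add[symmetric])
        then show "real (h choose d) * real (Fub (h - d)) * y ^ h = real (h choose d) * (real (Fub (h - d)) * y ^ (h - d)) * y ^ d"
          by simp
      qed
      finally show ?thesis .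
    qed
    also have "\<dots> \<ge> (\<Sum>d=1..h. real (h choose d) * (C * fact (h - d)) * y ^ d)"
    proof (rule sum_mono)
      fix d assume d: "d \<in> {1..h}"
      have "C * fact (h - d) \<le> real (Fub (h - d)) * y ^ (h - d)" unfolding C_def using less d by simp
      then show "real (h choose d) * (C * fact (h - d)) * y ^ d \<le> real (h choose d) * (real (Fub (h - d)) * y ^ (h - d)) * y ^ d"
        using y by (intro mult_right_mono mult_left_mono) auto
    qed
    also have "(\<Sum>d=1..h. real (h choose d) * (C * fact (h - d)) * y ^ d) = C * fact h * (\<Sum>d=1..h. y ^ d / fact d)"
    proof -
      have "(\<Sum>d=1..h. real (h choose d) * (C * fact (h - d)) * y ^ d) = (\<Sum>d=1..h. C * fact h * (y ^ d / fact d))"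
      proof (rule sum.cong[OF refl])
        fix d assume "d \<in> {1..h}"
        then have "real (h choose d) * fact (h - d) = fact h / fact d" by (intro choose_fact_real) auto
        then show "real (h choose d) * (C * fact (h - d)) * y ^ d = C * fact h * (y ^ d / fact d)"
          by (simp add: field_simps)
      qed
      then show ?thesis by (simp add: sum_distrib_left)
    qed
    also have "(\<Sum>d=1..h. y ^ d / fact d) \<ge> (\<Sum>d=1..b. y ^ d / fact d)"
      by (rule sum_mono2) (use False y in auto)
    then have "C * fact h * (\<Sum>d=1..h. y ^ d / fact d) \<ge> C * fact h * 1"
      using b C0 by (intro mult_left_mono) auto
    finally show ?thesis unfolding C_def by simp
  qed
qed

lemma exists_b:
  fixes y :: real assumes "ln 2 < y"
  shows "\<exists>b. 1 \<le> (\<Sum>d=1..b. y ^ d / fact d)"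
proof -
  have y0: "0 < y" using assms ln_gt_zero[of 2] by linarith
  have "exp (ln 2) < exp y" using assms exp_less_cancel_iff by blast
  then have "exp y > 2" by simp
  have lim: "(\<lambda>N. \<Sum>i<N. y ^ i / fact i) \<longlonglongrightarrow> exp y"
    using exp_converges[of y] unfolding sums_def by (simp add: divide_inverse mult.commute scaleR_conv_of_real)
  then have "eventually (\<lambda>N. (\<Sum>i<N. y ^ i / fact i) > 2) sequentially"
    using \<open>exp y > 2\<close> order_tendstoD(1) by blast
  then obtain N where N: "(\<Sum>i<N. y ^ i / fact i) > 2" by (meson eventually_sequentially order_refl)
  have "(\<Sum>i<N. y ^ i / fact i) \<le> (\<Sum>i\<in>{0..N}. y ^ i / fact i)"
    by (rule sum_mono2) (use y0 in auto)
  also have "\<dots> = 1 + (\<Sum>d=1..N. y ^ d / fact d)" by (simp add: sum.atLeast_Suc_atMost)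
  finally show ?thesis using N by (intro exI[of _ N]) simp
qed



lemma fact_n_bound: "fact n \<le> (real n + 1) * 4 ^ (n div 2) * (fact (n div 2))^2"
proof -
  define h where "h = n div 2"
  have f2: "fact (2 * h) = real (2 * h choose h) * (fact h)^2"
    using binomial_fact_lemma[of h "2 * h"] by (simp add: power2_eq_square mult_ac) (metis of_nat_fact of_nat_mult)
  have "real (2 * h choose h) \<le> 4 ^ h"
    using binomial_le_pow2[of "2 * h" h] by (simp add: power_mult)
  then have f2': "fact (2 * h) \<le> 4 ^ h * (fact h :: real)^2" unfolding f2 by (intro mult_right_mono) auto
  have "fact n \<le> (real n + 1) * fact (2 * h)"
  proof (cases "even n")
    case True
    then have "n = 2 * h" unfolding h_def by simp
    then show ?thesis by simp
  next
    case False
    then have n: "n = Suc (2 * h)" unfolding h_def by presburger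
    have "fact n = real n * fact (2 * h)" unfolding n by simp
    also have "\<dots> \<le> (real n + 1) * fact (2 * h)" by (intro mult_right_mono) auto
    finally show ?thesis .
  qed
  also have "\<dots> \<le> (real n + 1) * (4 ^ h * (fact h)^2)" by (intro mult_left_mono[OF f2']) auto
  finally show ?thesis unfolding h_def by (simp add: mult_ac)
qed

lemma alpha_lower:
  fixes y :: real assumes y: "ln 2 < y"
  shows "\<exists>C>0. \<forall>n. C * fact n \<le> real (alpha n) * (2 * y) ^ n * (real n + 1) ^ 3"
proof -
  have y0: "0 < y" using y ln_gt_zero[of 2] by linarith
  have y2: "1 \<le> 2 * y" using y ln2_ge_two_thirds by linarith
  obtain b where b: "1 \<le> (\<Sum>d=1..b. y ^ d / fact d)" using exists_b[OF y] by blast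
  define C0 where "C0 = min 1 (y ^ b) / fact b"
  have C0: "0 < C0" unfolding C0_def using y0 by simp
  have FL: "\<And>h. C0 * fact h \<le> real (Fub h) * y ^ h" unfolding C0_def by (rule fub_lower[OF y0 b])
  have main: "C0^2 * fact n \<le> real (alpha n) * (2 * y) ^ n * (real n + 1) ^ 3" for n
  proof -
    define h where "h = n div 2"
    have "\<exists>k\<le>h. Fub h \<le> (h + 1) * acount h k"
    proof (rule ccontr)
      assume "\<not> ?thesis"
      then have lt: "\<And>k. k \<in> {..h} \<Longrightarrow> (h + 1) * acount h k < Fub h" by force
      have "(h + 1) * Fub h = (\<Sum>k\<le>h. (h + 1) * acount h k)" unfolding Fub_def by (simp add: sum_distrib_left)
      also have "\<dots> < (\<Sum>k\<le>h. Fub h)" by (rule sum_strict_mono) (use lt in auto)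
      also have "\<dots> = (h + 1) * Fub h" by simp
      finally show False by simp
    qed
    then obtain k where k: "Fub h \<le> (h + 1) * acount h k" by blast
    have al: "acount h k ^ 2 \<le> alpha n" using alpha_ge_acount[of n k] unfolding h_def .
    have "real (Fub h) ^ 2 \<le> real ((h + 1) * acount h k) ^ 2"
      using k by (intro power_mono) (simp only: of_nat_le_iff, simp)
    also have "\<dots> = (real h + 1)^2 * real (acount h k ^ 2)" by (simp add: power2_eq_square algebra_simps)
    also have "\<dots> \<le> (real h + 1)^2 * real (alpha n)" using al by (intro mult_left_mono) auto
    finally have F2: "real (Fub h) ^ 2 \<le> (real h + 1)^2 * real (alpha n)" .
    have "(C0 * fact h) ^ 2 \<le> (real (Fub h) * y ^ h) ^ 2"
      using FL[of h] C0 by (intro power_mono) auto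
    also have "\<dots> = real (Fub h) ^ 2 * (y ^ h) ^ 2" by (simp add: power_mult_distrib)
    also have "\<dots> \<le> (real h + 1)^2 * real (alpha n) * (y ^ h) ^ 2" using F2 by (intro mult_right_mono) auto
    finally have A: "(C0 * fact h) ^ 2 \<le> (real h + 1)^2 * real (alpha n) * (y ^ h) ^ 2" .
    have "C0^2 * fact n \<le> C0^2 * ((real n + 1) * 4 ^ h * (fact h)^2)"
      using fact_n_bound[of n] unfolding h_def by (intro mult_left_mono) auto
    also have "\<dots> = (real n + 1) * 4 ^ h * (C0 * fact h) ^ 2" by (simp add: power_mult_distrib)
    also have "\<dots> \<le> (real n + 1) * 4 ^ h * ((real h + 1)^2 * real (alpha n) * (y ^ h) ^ 2)"
      using A by (intro mult_left_mono) auto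
    also have "(4::real) ^ h = 2 ^ h * 2 ^ h" by (simp add: power_mult_distrib[symmetric])
    also have "(real n + 1) * (2 ^ h * 2 ^ h) * ((real h + 1)^2 * real (alpha n) * (y ^ h) ^ 2) = real (alpha n) * ((2 * y) ^ (2 * h)) * ((real n + 1) * (real h + 1)^2)"
      by (simp add: power_mult_distrib power_mult power2_eq_square mult_ac)
    also have "\<dots> \<le> real (alpha n) * (2 * y) ^ n * ((real n + 1) * (real n + 1)^2)"
    proof (intro mult_mono mult_left_mono)
      show "(2 * y) ^ (2 * h) \<le> (2 * y) ^ n" using y2 unfolding h_def by (intro power_increasing) auto
      show "(real h + 1)^2 \<le> (real n + 1)^2" unfolding h_def by (intro power_mono) auto
    qed (use y0 in auto)
    also have "\<dots> = real (alpha n) * (2 * y) ^ n * (real n + 1) ^ 3" by (simp add: power2_eq_square power3_eq_cube)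
    finally show ?thesis .
  qed
  show ?thesis using main C0 by (intro exI[of _ "C0^2"]) auto
qed



lemma lim1: "(\<lambda>n. (6 * (real n + 1)^2) powr (1 / real n)) \<longlonglongrightarrow> 1"
  by real_asymp

lemma lim2: assumes "0 < C" shows "(\<lambda>n. (C / (real n + 1)^3) powr (1 / real n)) \<longlonglongrightarrow> 1"
  using assms by real_asymp

lemma root_pow: "0 < (a::real) \<Longrightarrow> 1 \<le> n \<Longrightarrow> (a ^ n) powr (1 / real n) = a"
  by (simp add: powr_realpow[symmetric] powr_powr)

lemma alpha0: "alpha 0 = 1"
proof -
  have "V 0 {1..0} = {[]}" unfolding V_def by auto
  then have "alpha 0 \<le> 1" using alpha_le[of 0] by simp
  moreover have "acount (0 div 2) 0 ^ 2 \<le> alpha 0" by (rule alpha_ge_acount)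
  ultimately show ?thesis by simp
qed

lemma upper_n:
  fixes c :: real assumes c0: "0 < c" and c: "c \<le> ln 2" and n: "1 \<le> n"
  shows "(real (alpha n) / fact n) powr (1 / real n) \<le> (6 * (real n + 1)^2) powr (1 / real n) / (2 * c)"
proof -
  have pc: "0 < (2 * c) ^ n" using c0 by simp
  have "real (alpha n) * (2 * c) ^ n \<le> 6 * (real n + 1) ^ 2 * fact n" using alpha_upper[OF c0 c, of n] by (simp add: add.commute)
  then have x: "real (alpha n) / fact n \<le> (6 * (real n + 1) ^ 2) / (2 * c) ^ n"
    using pc by (simp add: field_simps)
  have "(real (alpha n) / fact n) powr (1 / real n) \<le> ((6 * (real n + 1) ^ 2) / (2 * c) ^ n) powr (1 / real n)"
    by (rule powr_mono2[OF _ _ x]) auto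
  also have "\<dots> = (6 * (real n + 1)^2) powr (1 / real n) / ((2 * c) ^ n) powr (1 / real n)"
    by (rule powr_divide)
  also have "((2 * c) ^ n) powr (1 / real n) = 2 * c" using c0 n by (intro root_pow) auto
  finally show ?thesis .
qed

lemma lower_n:
  fixes y C :: real assumes y0: "0 < y" and C: "0 < C" and n: "1 \<le> n"
    and b: "C * fact n \<le> real (alpha n) * (2 * y) ^ n * (real n + 1) ^ 3"
  shows "(C / (real n + 1)^3) powr (1 / real n) / (2 * y) \<le> (real (alpha n) / fact n) powr (1 / real n)"
proof -
  have pc: "0 < (2 * y) ^ n" using y0 by simp
  have pn: "0 < (real n + 1) ^ 3" by simp
  have D: "0 < (2*y)^n * (real n + 1)^3 * fact n" using pc pn by simp
  have "(C / (real n + 1)^3) / (2 * y) ^ n = (C * fact n) / ((2*y)^n * (real n + 1)^3 * fact n)"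
    using D by (simp add: field_simps)
  also have "\<dots> \<le> (real (alpha n) * (2 * y) ^ n * (real n + 1) ^ 3) / ((2*y)^n * (real n + 1)^3 * fact n)"
    by (rule divide_right_mono[OF b]) (use D in simp)
  also have "\<dots> = real (alpha n) / fact n" using D y0 by (simp add: field_simps)
  finally have x: "(C / (real n + 1)^3) / (2 * y) ^ n \<le> real (alpha n) / fact n" .
  have "((C / (real n + 1)^3) / (2 * y) ^ n) powr (1 / real n) = (C / (real n + 1)^3) powr (1 / real n) / ((2 * y) ^ n) powr (1 / real n)"
    by (rule powr_divide)
  also have "((2 * y) ^ n) powr (1 / real n) = 2 * y" using y0 n by (intro root_pow) auto
  finally have eqq: "((C / (real n + 1)^3) / (2 * y) ^ n) powr (1 / real n) = (C / (real n + 1)^3) powr (1 / real n) / (2 * y)" .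
  have "(C / (real n + 1)^3) powr (1 / real n) / (2 * y) = ((C / (real n + 1)^3) / (2 * y) ^ n) powr (1 / real n)"
    using eqq by simp
  also have "\<dots> \<le> (real (alpha n) / fact n) powr (1 / real n)"
    by (rule powr_mono2[OF _ _ x]) (use C pc in auto)
  finally show ?thesis .
qed

theorem corollary1p4:
  shows "((\<lambda>n. (real (alpha n) / fact n) powr (1 / real n))
            \<longlongrightarrow> 1 / (2 * ln 2)) sequentially
         \<and> (\<forall>n. alpha n \<le> alpha_21_34 n)
         \<and> (\<exists>e :: nat \<Rightarrow> real. e \<longlonglongrightarrow> 0 \<and>
              (\<forall>n. real (alpha n) = (1 / (2 * ln 2) + e n) ^ n * fact n))"
proof -
  define L :: real where "L = 1 / (2 * ln 2)"
  define g where "g = (\<lambda>n. (real (alpha n) / fact n) powr (1 / real n))"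
  have ln2: "0 < ln (2::real)" by simp
  have Lpos: "0 < L" unfolding L_def by simp
  have L2: "2 * L = 1 / ln 2" unfolding L_def by simp
  have lim: "g \<longlonglongrightarrow> L"
  proof (rule tendstoI)
    fix \<epsilon> :: real assume e: "0 < \<epsilon>"
    define c where "c = 1 / (2 * L + \<epsilon>)"
    have c0: "0 < c" using Lpos e by (simp add: c_def)
    have cln: "c \<le> ln 2"
    proof -
      have "c \<le> 1 / (2 * L)" unfolding c_def using Lpos e by (intro divide_left_mono) auto
      then show ?thesis using L2 ln2 by simp
    qed
    have c2: "1 / (2 * c) = L + \<epsilon> / 2" unfolding c_def using Lpos e by (simp add: field_simps)
    have r1: "1 < (L + \<epsilon>) / (L + \<epsilon> / 2)" using Lpos e by (simp add: field_simps)
    have ev1: "eventually (\<lambda>n. (6 * (real n + 1)^2) powr (1 / real n) < (L + \<epsilon>) / (L + \<epsilon> / 2)) sequentially"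
      using order_tendstoD(2)[OF lim1 r1] .
    have up: "eventually (\<lambda>n. g n < L + \<epsilon>) sequentially"
      using ev1 eventually_ge_at_top[of 1]
    proof eventually_elim
      case (elim n)
      have "g n \<le> (6 * (real n + 1)^2) powr (1 / real n) / (2 * c)"
        unfolding g_def using upper_n[OF c0 cln elim(2)] .
      also have "\<dots> = (6 * (real n + 1)^2) powr (1 / real n) * (1 / (2 * c))" by simp
      also have "\<dots> = (6 * (real n + 1)^2) powr (1 / real n) * (L + \<epsilon> / 2)" unfolding c2 ..
      also have "\<dots> < (L + \<epsilon>) / (L + \<epsilon> / 2) * (L + \<epsilon> / 2)"
        using elim(1) Lpos e by (intro mult_strict_right_mono) auto
      also have "\<dots> = L + \<epsilon>" using Lpos e by simp
      finally show ?case .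
    qed
    define e' where "e' = min \<epsilon> L"
    have e'0: "0 < e'" and e'L: "e' \<le> L" and e'e: "e' \<le> \<epsilon>" unfolding e'_def using e Lpos by auto
    define y where "y = 1 / (2 * L - e')"
    have y0: "0 < y" unfolding y_def using e'L Lpos by simp
    have yln: "ln 2 < y"
    proof -
      have "1 / (2 * L) < y" unfolding y_def using e'L e'0 Lpos by (intro divide_strict_left_mono) auto
      then show ?thesis using L2 ln2 by simp
    qed
    have y2: "1 / (2 * y) = L - e' / 2" unfolding y_def by (simp add: field_simps)
    obtain C where C: "0 < C" and Cb: "\<And>n. C * fact n \<le> real (alpha n) * (2 * y) ^ n * (real n + 1) ^ 3"
      using alpha_lower[OF yln] by blast
    have r2: "(L - e') / (L - e' / 2) < 1" using e'0 e'L by (simp add: field_simps)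
    have ev2: "eventually (\<lambda>n. (L - e') / (L - e' / 2) < (C / (real n + 1)^3) powr (1 / real n)) sequentially"
      using order_tendstoD(1)[OF lim2[OF C] r2] .
    have lo: "eventually (\<lambda>n. L - \<epsilon> < g n) sequentially"
      using ev2 eventually_ge_at_top[of 1]
    proof eventually_elim
      case (elim n)
      have pos: "0 < L - e' / 2" using e'0 e'L by simp
      have "L - \<epsilon> \<le> L - e'" using e'e by simp
      also have "\<dots> = (L - e') / (L - e' / 2) * (L - e' / 2)" using pos by simp
      also have "\<dots> < (C / (real n + 1)^3) powr (1 / real n) * (L - e' / 2)"
        using elim(1) pos by (intro mult_strict_right_mono) auto
      also have "\<dots> = (C / (real n + 1)^3) powr (1 / real n) * (1 / (2 * y))" unfolding y2 ..
      also have "\<dots> = (C / (real n + 1)^3) powr (1 / real n) / (2 * y)" by simp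
      also have "\<dots> \<le> g n" unfolding g_def by (rule lower_n[OF y0 C elim(2) Cb])
      finally show ?case .
    qed
    show "eventually (\<lambda>n. dist (g n) L < \<epsilon>) sequentially"
      using up lo by eventually_elim (simp add: dist_real_def abs_less_iff)
  qed
  have part2: "\<forall>n. alpha n \<le> alpha_21_34 n"
  proof
    fix n
    have fin: "finite {p. p permutes {1..n} \<and> \<not> contains_21_34 n p}"
      by (rule finite_subset[of _ "{p. p permutes {1..n}}"]) (auto simp: finite_permutations)
    show "alpha n \<le> alpha_21_34 n" unfolding alpha_def alpha_21_34_def
      by (rule card_mono[OF fin]) auto
  qed
  define e where "e = (\<lambda>n. g n - L)"
  have elim: "e \<longlonglongrightarrow> 0" unfolding e_def using tendsto_diff[OF lim tendsto_const[of L]] by simp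
  have eq: "real (alpha n) = (L + e n) ^ n * fact n" for n
  proof (cases "n = 0")
    case True then show ?thesis using alpha0 by simp
  next
    case False
    define x where "x = real (alpha n) / fact n"
    have x0: "0 \<le> x" unfolding x_def by simp
    have "(L + e n) ^ n = (x powr (1 / real n)) ^ n" unfolding e_def g_def x_def by simp
    also have "\<dots> = x"
    proof (cases "x = 0")
      case True then show ?thesis using False by simp
    next
      case False
      then have "(x powr (1 / real n)) ^ n = x powr (real n * (1 / real n))" by (rule powr_power)
      also have "\<dots> = x" using \<open>n \<noteq> 0\<close> x0 by simp
      finally show ?thesis .
    qed
    finally show ?thesis unfolding x_def by simp
  qed
  show ?thesis
  proof (intro conjI)
    show "(\<lambda>n. (real (alpha n) / fact n) powr (1 / real n)) \<longlonglongrightarrow> 1 / (2 * ln 2)"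
      using lim unfolding g_def L_def .
    show "\<forall>n. alpha n \<le> alpha_21_34 n" by (rule part2)
    show "\<exists>e :: nat \<Rightarrow> real. e \<longlonglongrightarrow> 0 \<and> (\<forall>n. real (alpha n) = (1 / (2 * ln 2) + e n) ^ n * fact n)"
      using elim eq unfolding L_def by blast
  qed
qed

end
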